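(* If $A\subseteq\mathbb{N}$ is $D$-w.e.u., then there is a disjoint strong array intersecting $\overline{A}=\mathbb{N}\setminus A$; that is, there is a computable $h\colon\mathbb{N}\to\mathfrak{P}_{\mathrm{fin}}(\mathbb{N})$ with $h(n)\cap h(m)=\emptyset$ for all $n\neq m$ and such that for every $n$ there is $z\in h(n)$ with $z\notin A$.
   Context: $\varphi_0,\varphi_1,\ldots$ is a standard acceptable enumeration of the partial computable functions $\mathbb{N}\to\mathbb{N}$, $\mathbb{1}_A$ the characteristic function of $A$. $\mathfrak{P}_{\mathrm{fin}}(\mathbb{N})$ is the set of finite subsets of $\mathbb{N}$; $f\colon\mathbb{N}\to\mathfrak{P}_{\mathrm{fin}}(\mathbb{N})$ is computable if $e\mapsto$ (canonical index of $f(e)$) is computable. A recursively enumerable $A$ is $D$-w.e.u. if there is a computable $f\colon\mathbb{N}\to\mathfrak{P}_{\mathrm{fin}}(\mathbb{N})$ such that for all $e$: if $\varphi_e(z)$ is defined for all $z\in f(e)$, then there is $z\in f(e)$ with $\varphi_e(z)\neq\mathbb{1}_A(z)$. *)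

theory Defs
  imports Main "HOL-Library.Nat_Bijection"
begin

datatype recf = Zf | Sf | Proj nat | Comp recf "recf list" | Prim recf recf | Mu recf

inductive eval :: "recf \<Rightarrow> nat list \<Rightarrow> nat \<Rightarrow> bool" where
  ev_Z: "eval Zf xs 0"
| ev_S: "eval Sf (x # xs) (Suc x)"
| ev_Proj: "i < length xs \<Longrightarrow> eval (Proj i) xs (xs ! i)"
| ev_Comp: "list_all2 (\<lambda>g y. eval g xs y) gs ys \<Longrightarrow> eval f ys z \<Longrightarrow> eval (Comp f gs) xs z"
| ev_Prim0: "eval f xs y \<Longrightarrow> eval (Prim f g) (0 # xs) y"
| ev_PrimS: "eval (Prim f g) (n # xs) y \<Longrightarrow> eval g (n # y # xs) z \<Longrightarrow> eval (Prim f g) (Suc n # xs) z"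
| ev_Mu: "eval f (n # xs) 0 \<Longrightarrow> (\<forall>m<n. \<exists>y. eval f (m # xs) (Suc y)) \<Longrightarrow> eval (Mu f) xs n"

fun enc :: "recf \<Rightarrow> nat" where
  "enc Zf = prod_encode (0, 0)"
| "enc Sf = prod_encode (1, 0)"
| "enc (Proj i) = prod_encode (2, i)"
| "enc (Comp f gs) = prod_encode (3, prod_encode (enc f, list_encode (map enc gs)))"
| "enc (Prim f g) = prod_encode (4, prod_encode (enc f, enc g))"
| "enc (Mu f) = prod_encode (5, enc f)"

text \<open>The standard enumeration \<phi>_e of unary partial computable functions:
  \<phi>_e is the function computed by the program with code e (nowhere defined if
  e codes no program).\<close>

definition phi :: "nat \<Rightarrow> nat \<Rightarrow> nat option" where
  "phi e x = (if (\<exists>r. enc r = e) \<and> (\<exists>y. eval (THE r. enc r = e) [x] y)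
              then Some (THE y. eval (THE r. enc r = e) [x] y) else None)"

definition computable :: "(nat \<Rightarrow> nat) \<Rightarrow> bool" where
  "computable g \<longleftrightarrow> (\<exists>e. \<forall>x. phi e x = Some (g x))"

definition rec_enum :: "nat set \<Rightarrow> bool" where
  "rec_enum A \<longleftrightarrow> (\<exists>e. A = {x. phi e x \<noteq> None})"

definition ind :: "nat set \<Rightarrow> nat \<Rightarrow> nat" where
  "ind A z = (if z \<in> A then 1 else 0)"

definition canon :: "nat set \<Rightarrow> nat" where
  "canon D = (\<Sum>x\<in>D. 2 ^ x)"

definition fin_computable :: "(nat \<Rightarrow> nat set) \<Rightarrow> bool" where
  "fin_computable f \<longleftrightarrow> (\<forall>e. finite (f e)) \<and> computable (\<lambda>e. canon (f e))"

definition D_weu :: "nat set \<Rightarrow> bool" where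
  "D_weu A \<longleftrightarrow> rec_enum A \<and>
     (\<exists>f. fin_computable f \<and>
        (\<forall>e. (\<forall>z\<in>f e. phi e z \<noteq> None) \<longrightarrow> (\<exists>z\<in>f e. phi e z \<noteq> Some (ind A z))))"

end

theory Submission imports Defs begin
lemma enc_inj: "enc r = enc s \<Longrightarrow> r = s"
proof (induction r arbitrary: s)
  case (Comp f gs)
  from Comp.prems obtain f' gs' where s: "s = Comp f' gs'" "enc f = enc f'" "map enc gs = map enc gs'"
    by (cases s) (simp_all add: list_encode_eq)
  then have "f = f'" using Comp.IH(1) by blast
  moreover have "gs = gs'" using s(3) Comp.IH(2)
  proof (induction gs arbitrary: gs')
    case Nil then show ?case by simp
  next
    case (Cons a gs) then show ?case by (cases gs') auto
  qed
  ultimately show ?case using s by simp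
next
  case Zf then show ?case by (cases s) simp_all
next
  case Sf then show ?case by (cases s) simp_all
next
  case (Proj i) then show ?case by (cases s) simp_all
next
  case (Prim f g) then show ?case by (cases s) simp_all
next
  case (Mu f) then show ?case by (cases s) simp_all
qed

inductive_cases evZE: "eval Zf xs y"
inductive_cases evSE: "eval Sf xs y"
inductive_cases evProjE: "eval (Proj i) xs y"
inductive_cases evCompE: "eval (Comp f gs) xs y"
inductive_cases evPrimE: "eval (Prim f g) xs y"
inductive_cases evMuE: "eval (Mu f) xs y"

lemma eval_det: "eval r xs y \<Longrightarrow> eval r xs y' \<Longrightarrow> y = y'"
proof (induction arbitrary: y' rule: eval.induct)
  case (ev_Z xs)
  then show ?case by (rule evZE) simp
next
  case (ev_S x xs)
  then show ?case by (rule evSE) simp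
next
  case (ev_Proj i xs)
  from ev_Proj.prems show ?case by (rule evProjE) simp
next
  case (ev_Comp xs gs ys f z)
  from ev_Comp.prems obtain ys' where a: "list_all2 (\<lambda>g y. eval g xs y) gs ys'" "eval f ys' y'"
    by (rule evCompE) blast
  have "ys = ys'" using ev_Comp.IH(1) a(1)
  proof (induction gs arbitrary: ys ys')
    case Nil then show ?case by auto
  next
    case (Cons g gs)
    then show ?case by (auto simp: list_all2_Cons1)
  qed
  then show ?case using ev_Comp a by auto
next
  case (ev_Prim0 f xs y)
  from ev_Prim0.prems show ?case
    apply (rule evPrimE)
     apply (metis ev_Prim0.IH list.inject)
    by simp
next
  case (ev_PrimS f g n xs y z)
  from ev_PrimS.prems show ?case
    apply (rule evPrimE)
     apply simp
    by (metis ev_PrimS.IH list.inject old.nat.inject)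
next
  case (ev_Mu f n xs)
  from ev_Mu.prems obtain n' where "y' = n'" "eval f (n' # xs) 0" "\<forall>m<n'. \<exists>y. eval f (m # xs) (Suc y)"
    by (rule evMuE) blast
  then show ?case using ev_Mu
    by (metis linorder_neqE_nat nat.distinct(1))
qed

definition ok :: "nat \<Rightarrow> recf \<Rightarrow> (nat list \<Rightarrow> nat) \<Rightarrow> bool" where
  "ok n r g \<longleftrightarrow> (\<forall>xs. length xs = n \<longrightarrow> eval r xs (g xs))"

lemma ok_phi: assumes "ok 1 r g" shows "phi (enc r) x = Some (g [x])"
proof -
  have ev: "eval r [x] (g [x])" using assms by (simp add: ok_def)
  have th: "(THE s. enc s = enc r) = r" using enc_inj by blast
  have "(THE y. eval r [x] y) = g [x]" using ev eval_det by blast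
  then show ?thesis using ev th by (auto simp: phi_def)
qed

lemma ok_computable: "ok 1 r g \<Longrightarrow> computable (\<lambda>x. g [x])"
  unfolding computable_def using ok_phi by blast

lemma computable_ok: assumes "computable g" shows "\<exists>r. ok 1 r (\<lambda>xs. g (xs!0))"
proof -
  obtain e where e: "\<And>x. phi e x = Some (g x)" using assms computable_def by blast
  then have "phi e 0 \<noteq> None" by simp
  then obtain r where r: "enc r = e" by (auto simp: phi_def split: if_splits)
  have th: "(THE s. enc s = e) = r" using enc_inj r by blast
  have "eval r [x] (g x)" for x
  proof -
    have "phi e x = Some (g x)" by (rule e)
    then have "\<exists>y. eval r [x] y" "(THE y. eval r [x] y) = g x"
      by (auto simp: phi_def th split: if_splits)
    then show ?thesis by (metis eval_det theI)
  qed
  then have "ok 1 r (\<lambda>xs. g (xs!0))"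
    by (auto simp: ok_def length_Suc_conv)
  then show ?thesis by blast
qed

lemma ok_Z: "ok n Zf (\<lambda>_. 0)"
  by (simp add: ok_def ev_Z)

lemma ok_S: "ok 1 Sf (\<lambda>xs. Suc (xs!0))"
  by (auto simp: ok_def length_Suc_conv intro: ev_S)

lemma ok_Proj: "i < n \<Longrightarrow> ok n (Proj i) (\<lambda>xs. xs!i)"
  by (auto simp: ok_def intro: ev_Proj)

lemma ok_CompI:
  assumes "ok m f g" "length gs = m" "list_all2 (\<lambda>r h. ok n r h) gs hs"
    "\<And>xs. length xs = n \<Longrightarrow> F xs = g (map (\<lambda>h. h xs) hs)"
  shows "ok n (Comp f gs) F"
  unfolding ok_def
proof (intro allI impI)
  fix xs :: "nat list" assume l: "length xs = n"
  have "list_all2 (\<lambda>g y. eval g xs y) gs (map (\<lambda>h. h xs) hs)"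
    using assms(3) l by (induction gs hs rule: list_all2_induct) (auto simp: ok_def)
  moreover have "length (map (\<lambda>h. h xs) hs) = length gs"
    using assms(3) by (simp add: list_all2_lengthD)
  ultimately show "eval (Comp f gs) xs (F xs)"
    using assms(1,2,4) l by (auto simp: ok_def intro: ev_Comp)
qed

lemma ok_PrimI:
  assumes "ok n f g" "ok (Suc (Suc n)) s h"
    "\<And>ys. length ys = n \<Longrightarrow> F (0 # ys) = g ys"
    "\<And>k ys. length ys = n \<Longrightarrow> F (Suc k # ys) = h (k # F (k # ys) # ys)"
  shows "ok (Suc n) (Prim f s) F"
  unfolding ok_def
proof (intro allI impI)
  fix xs :: "nat list" assume "length xs = Suc n"
  then obtain k ys where xs: "xs = k # ys" "length ys = n" by (auto simp: length_Suc_conv)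
  have "eval (Prim f s) (k # ys) (F (k # ys))"
  proof (induction k)
    case 0 then show ?case using assms(1,3) xs(2) by (auto simp: ok_def intro: ev_Prim0)
  next
    case (Suc k)
    have "eval s (k # F (k # ys) # ys) (h (k # F (k # ys) # ys))"
      using assms(2) xs(2) by (simp add: ok_def)
    then show ?case using Suc assms(4) xs(2) by (auto intro: ev_PrimS)
  qed
  then show "eval (Prim f s) xs (F xs)" using xs by simp
qed

lemma ok_cong: "ok n r g \<Longrightarrow> (\<And>xs. length xs = n \<Longrightarrow> g xs = g' xs) \<Longrightarrow> ok n r g'"
  by (simp add: ok_def)

lemma ok_Comp1: "ok 1 f g \<Longrightarrow> ok n r1 h1 \<Longrightarrow> ok n (Comp f [r1]) (\<lambda>xs. g [h1 xs])"
  by (rule ok_CompI) auto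
lemma ok_Comp2: "ok 2 f g \<Longrightarrow> ok n r1 h1 \<Longrightarrow> ok n r2 h2 \<Longrightarrow> ok n (Comp f [r1, r2]) (\<lambda>xs. g [h1 xs, h2 xs])"
  by (rule ok_CompI[where m=2]) auto
lemma ok_Comp3: "ok 3 f g \<Longrightarrow> ok n r1 h1 \<Longrightarrow> ok n r2 h2 \<Longrightarrow> ok n r3 h3 \<Longrightarrow>
   ok n (Comp f [r1, r2, r3]) (\<lambda>xs. g [h1 xs, h2 xs, h3 xs])"
  by (rule ok_CompI[where m=3]) auto

lemma ok_PrimJ:
  assumes "ok n f g" "ok m2 s h" "m = Suc n" "m2 = Suc m"
    "\<And>ys. length ys = n \<Longrightarrow> F (0 # ys) = g ys"
    "\<And>k ys. length ys = n \<Longrightarrow> F (Suc k # ys) = h (k # F (k # ys) # ys)"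
  shows "ok m (Prim f s) F"
  using ok_PrimI[of n f g s h F] assms by simp

fun K :: "nat \<Rightarrow> recf" where
  "K 0 = Zf" | "K (Suc c) = Comp Sf [K c]"

lemma ok_K: "ok n (K c) (\<lambda>_. c)"
proof (induction c)
  case 0 then show ?case by (simp add: ok_Z)
next
  case (Suc c) then show ?case
    using ok_Comp1[OF ok_S] by fastforce
qed

definition "ADD = Prim (Proj 0) (Comp Sf [Proj 1])"
lemma ok_ADD: "ok 2 ADD (\<lambda>xs. xs!0 + xs!1)"
  unfolding ADD_def
  by (rule ok_PrimJ[OF ok_Proj ok_Comp1[OF ok_S ok_Proj], where n=1]) auto


definition "TRI = Prim Zf (Comp ADD [Proj 1, Comp Sf [Proj 0]])"
lemma ok_TRI: "ok 1 TRI (\<lambda>xs. triangle (xs!0))"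
  unfolding TRI_def
  by (rule ok_PrimJ[OF ok_Z ok_Comp2[OF ok_ADD ok_Proj ok_Comp1[OF ok_S ok_Proj]], where n=0]) auto

definition "PE = Comp ADD [Comp TRI [ADD], Proj 0]"
lemma ok_PE: "ok 2 PE (\<lambda>xs. prod_encode (xs!0, xs!1))"
  unfolding PE_def
  by (rule ok_cong[OF ok_Comp2[OF ok_ADD ok_Comp1[OF ok_TRI ok_ADD] ok_Proj]]) (auto simp: prod_encode_def)

definition "NOT = Prim (K 1) (K 0)"
lemma ok_NOT: "ok 1 NOT (\<lambda>xs. if xs!0 = 0 then 1 else 0)"
  unfolding NOT_def
  by (rule ok_PrimJ[OF ok_K ok_K, where n=0]) auto

definition "PAR = Prim Zf (Comp NOT [Proj 1])"
lemma ok_PAR: "ok 1 PAR (\<lambda>xs. xs!0 mod 2)"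
  unfolding PAR_def
  by (rule ok_PrimJ[OF ok_Z ok_Comp1[OF ok_NOT ok_Proj], where n=0]) (simp_all add: mod_Suc)

definition "HALF = Prim Zf (Comp ADD [Proj 1, Comp PAR [Proj 0]])"
lemma ok_HALF: "ok 1 HALF (\<lambda>xs. xs!0 div 2)"
  unfolding HALF_def
  by (rule ok_PrimJ[OF ok_Z ok_Comp2[OF ok_ADD ok_Proj ok_Comp1[OF ok_PAR ok_Proj]], where n=0])
     (auto simp: div_Suc odd_iff_mod_2_eq_one mod_Suc split: if_splits)

definition "DIVP = Prim (Proj 0) (Comp HALF [Proj 1])"
lemma ok_DIVP: "ok 2 DIVP (\<lambda>xs. xs!1 div 2 ^ (xs!0))"
  unfolding DIVP_def
  by (rule ok_PrimJ[OF ok_Proj ok_Comp1[OF ok_HALF ok_Proj], where n=1]) (auto simp: power_Suc2 div_mult2_eq simp del: power_Suc)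

definition "BIT = Comp PAR [DIVP]"
lemma ok_BIT: "ok 2 BIT (\<lambda>xs. xs!1 div 2 ^ (xs!0) mod 2)"
  unfolding BIT_def
  by (rule ok_cong[OF ok_Comp1[OF ok_PAR ok_DIVP]]) simp

definition "POW = Prim (K 1) (Comp ADD [Proj 1, Proj 1])"
lemma ok_POW: "ok 1 POW (\<lambda>xs. 2 ^ (xs!0))"
  unfolding POW_def
  by (rule ok_PrimJ[OF ok_K ok_Comp2[OF ok_ADD ok_Proj ok_Proj], where n=0]) auto

definition "SEL = Prim (Proj 0) (Proj 3)"
lemma ok_SEL: "ok 3 SEL (\<lambda>xs. if xs!0 = 0 then xs!1 else xs!2)"
  unfolding SEL_def
  by (rule ok_PrimJ[OF ok_Proj ok_Proj, where n=2]) auto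

definition "SUM0 R = Prim (K 0) (Comp ADD [Proj 1, Comp R [Proj 0]])"
lemma ok_SUM0: "ok 1 R r \<Longrightarrow> ok 1 (SUM0 R) (\<lambda>xs. \<Sum>t<xs!0. r [t])"
  unfolding SUM0_def
  by (rule ok_PrimJ[OF ok_K ok_Comp2[OF ok_ADD ok_Proj ok_Comp1[OF _ ok_Proj]], where n=0]) auto

definition "SUM1 R = Prim (K 0) (Comp ADD [Proj 1, Comp R [Proj 0, Proj 2]])"
lemma ok_SUM1: "ok 2 R r \<Longrightarrow> ok 2 (SUM1 R) (\<lambda>xs. \<Sum>t<xs!0. r [t, xs!1])"
  unfolding SUM1_def
  by (rule ok_PrimJ[OF ok_K ok_Comp2[OF ok_ADD ok_Proj ok_Comp2[OF _ ok_Proj ok_Proj]], where n=1]) auto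


definition "Q = Comp NOT [Comp BIT [Proj 1, Proj 0]]"
lemma ok_Q: "ok 2 Q (\<lambda>xs. if xs!0 div 2 ^ (xs!1) mod 2 = 0 then 1 else 0)"
  unfolding Q_def
  by (rule ok_cong[OF ok_Comp1[OF ok_NOT ok_Comp2[OF ok_BIT ok_Proj ok_Proj]]]) auto

definition "P t = Comp Q [K t, Proj 0]"
lemma ok_P: "ok 1 (P t) (\<lambda>xs. if t div 2 ^ (xs!0) mod 2 = 0 then 1 else 0)"
  unfolding P_def
  by (rule ok_cong[OF ok_Comp2[OF ok_Q ok_K ok_Proj]]) auto

definition "KE = Prim (K (enc Zf)) (Comp PE [K 3, Comp PE [K (enc Sf), Comp Sf [Comp PE [Proj 1, K 0]]]])"
lemma ok_KE: "ok 1 KE (\<lambda>xs. enc (K (xs!0)))"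
  unfolding KE_def
  by (rule ok_PrimJ[OF ok_K ok_Comp2[OF ok_PE ok_K ok_Comp2[OF ok_PE ok_K ok_Comp1[OF ok_S ok_Comp2[OF ok_PE ok_Proj ok_K]]]], where n=0])
    auto

definition "C = Comp PE [K 3, Comp PE [K (enc Q), Comp Sf [Comp PE [KE, Comp Sf [Comp PE [K (enc (Proj 0)), K 0]]]]]]"
lemma ok_C: "ok 1 C (\<lambda>xs. enc (P (xs!0)))"
  unfolding C_def
  by (rule ok_cong[OF ok_Comp2[OF ok_PE ok_K ok_Comp2[OF ok_PE ok_K ok_Comp1[OF ok_S ok_Comp2[OF ok_PE ok_KE
       ok_Comp1[OF ok_S ok_Comp2[OF ok_PE ok_K ok_K]]]]]]]) (auto simp: P_def)

definition "Fv f t = canon (f (enc (P t)))"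
definition termv :: "(nat \<Rightarrow> nat set) \<Rightarrow> nat \<Rightarrow> nat \<Rightarrow> nat" where
  "termv f x H = (if H div 2 ^ x mod 2 = 0 then (if (\<Sum>t<Suc H. Fv f t div 2 ^ x mod 2) = 0 then 0 else 2 ^ x) else 0)"
definition "Bv f H = (\<Sum>t<Suc H. Fv f t)"
definition "Gv f H = (\<Sum>x<Bv f H. termv f x H)"
primrec Sv where "Sv f 0 = 0" | "Sv f (Suc n) = Sv f n + Gv f (Sv f n)"

definition "FF RF = Comp RF [C]"
definition "EXP RF = SUM1 (Comp BIT [Proj 1, Comp (FF RF) [Proj 0]])"
definition "TRM RF = Comp SEL [Comp BIT [Proj 0, Proj 1], Comp SEL [Comp (EXP RF) [Comp Sf [Proj 1], Proj 0], K 0, Comp POW [Proj 0]], K 0]"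
definition "BB RF = Comp (SUM0 (FF RF)) [Comp Sf [Proj 0]]"
definition "GG RF = Comp (SUM1 (TRM RF)) [BB RF, Proj 0]"
definition "SS RF = Prim Zf (Comp ADD [Proj 1, Comp (GG RF) [Proj 1]])"
definition "HH RF = Comp (GG RF) [SS RF]"

context
  fixes f RF
  assumes RF: "ok 1 RF (\<lambda>xs. canon (f (xs!0)))"
begin

lemma ok_FF: "ok 1 (FF RF) (\<lambda>xs. Fv f (xs!0))"
  unfolding FF_def
  by (rule ok_cong[OF ok_Comp1[OF RF ok_C]]) (auto simp: Fv_def)

lemma ok_EXP: "ok 2 (EXP RF) (\<lambda>xs. \<Sum>t<xs!0. Fv f t div 2 ^ (xs!1) mod 2)"
  unfolding EXP_def
  by (rule ok_cong[OF ok_SUM1[OF ok_Comp2[OF ok_BIT ok_Proj ok_Comp1[OF ok_FF ok_Proj]]]]) auto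

lemma ok_TRM: "ok 2 (TRM RF) (\<lambda>xs. termv f (xs!0) (xs!1))"
  unfolding TRM_def
  by (rule ok_cong[OF ok_Comp3[OF ok_SEL ok_Comp2[OF ok_BIT ok_Proj ok_Proj]
     ok_Comp3[OF ok_SEL ok_Comp2[OF ok_EXP ok_Comp1[OF ok_S ok_Proj] ok_Proj] ok_K ok_Comp1[OF ok_POW ok_Proj]] ok_K]])
    (auto simp: termv_def)

lemma ok_BB: "ok 1 (BB RF) (\<lambda>xs. Bv f (xs!0))"
  unfolding BB_def
  by (rule ok_cong[OF ok_Comp1[OF ok_SUM0[OF ok_FF] ok_Comp1[OF ok_S ok_Proj]]]) (auto simp: Bv_def)

lemma ok_GG: "ok 1 (GG RF) (\<lambda>xs. Gv f (xs!0))"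
  unfolding GG_def
  by (rule ok_cong[OF ok_Comp2[OF ok_SUM1[OF ok_TRM] ok_BB ok_Proj]]) (auto simp: Gv_def)

lemma ok_SS: "ok 1 (SS RF) (\<lambda>xs. Sv f (xs!0))"
  unfolding SS_def
  by (rule ok_PrimJ[OF ok_Z ok_Comp2[OF ok_ADD ok_Proj ok_Comp1[OF ok_GG ok_Proj]], where n=0]) auto

lemma ok_HH: "ok 1 (HH RF) (\<lambda>xs. Gv f (Sv f (xs!0)))"
  unfolding HH_def
  by (rule ok_cong[OF ok_Comp1[OF ok_GG ok_SS]]) auto

end


lemma canon_enc: "canon D = set_encode D"
  by (simp add: canon_def set_encode_def)

lemma mem_dec: "(H div 2 ^ x mod 2 = 0) \<longleftrightarrow> x \<notin> set_decode H"
  by (simp add: set_decode_def even_iff_mod_2_eq_zero)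

lemma mem_canon: "finite D \<Longrightarrow> (canon D div 2 ^ x mod 2 = 0) \<longleftrightarrow> x \<notin> D"
  by (simp add: mem_dec canon_enc)

lemma lt_canon: assumes "finite D" "x \<in> D" shows "x < canon D"
proof -
  have "x < 2 ^ x" by simp
  also have "2 ^ x \<le> canon D" using member_le_sum[of x D "\<lambda>y. (2::nat)^y"] assms by (simp add: canon_def)
  finally show ?thesis .
qed

context
  fixes f :: "nat \<Rightarrow> nat set"
  assumes fin: "\<And>e. finite (f e)"
begin

definition "hset H = {x. x \<notin> set_decode H \<and> (\<exists>t\<le>H. x \<in> f (enc (P t)))}"

lemma termv_eq: "termv f x H = (if x \<in> hset H then 2 ^ x else 0)"
proof -
  have "((\<Sum>t<Suc H. Fv f t div 2 ^ x mod 2) = 0) \<longleftrightarrow> (\<forall>t<Suc H. Fv f t div 2 ^ x mod 2 = 0)"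
    by (auto simp: sum_eq_0_iff simp del: sum.lessThan_Suc)
  also have "\<dots> \<longleftrightarrow> \<not> (\<exists>t\<le>H. x \<in> f (enc (P t)))"
    by (auto simp: Fv_def mem_canon[OF fin] less_Suc_eq_le)
  finally show ?thesis unfolding termv_def hset_def by (auto simp: mem_dec)
qed

lemma hset_bound: "hset H \<subseteq> {..<Bv f H}"
proof
  fix x assume "x \<in> hset H"
  then obtain t where t: "t \<le> H" "x \<in> f (enc (P t))" by (auto simp: hset_def)
  have "x < Fv f t" unfolding Fv_def using lt_canon[OF fin t(2)] .
  also have "Fv f t \<le> Bv f H" unfolding Bv_def using t(1) by (intro member_le_sum) auto
  finally show "x \<in> {..<Bv f H}" by simp
qed

lemma hset_fin: "finite (hset H)"
  using hset_bound finite_subset by blast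

lemma Gv_eq: "Gv f H = canon (hset H)"
proof -
  have "Gv f H = (\<Sum>x<Bv f H. if x \<in> hset H then 2 ^ x else 0)"
    by (simp add: Gv_def termv_eq)
  also have "\<dots> = (\<Sum>x\<in>{..<Bv f H} \<inter> hset H. 2 ^ x)"
    by (simp add: sum.inter_restrict)
  also have "{..<Bv f H} \<inter> hset H = hset H" using hset_bound by blast
  finally show ?thesis by (simp add: canon_def)
qed

definition "hh n = hset (Sv f n)"
definition "Hn n = (\<Union>k<n. hh k)"

lemma Sv_eq: "finite (Hn n) \<and> Sv f n = canon (Hn n)"
proof (induction n)
  case 0 then show ?case by (simp add: Hn_def canon_def)
next
  case (Suc n)
  have fh: "finite (hh n)" by (simp add: hh_def hset_fin)
  have d: "Hn n \<inter> hh n = {}"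
    using Suc by (auto simp: hh_def hset_def canon_enc)
  have e: "Hn (Suc n) = Hn n \<union> hh n" by (auto simp: Hn_def lessThan_Suc)
  have "Sv f (Suc n) = canon (Hn n) + canon (hh n)"
    using Suc by (simp add: Gv_eq hh_def)
  also have "\<dots> = canon (Hn (Suc n))"
    unfolding e canon_def using Suc fh d by (simp add: sum.union_disjoint)
  finally show ?case using e Suc fh by simp
qed

lemma dec_Sv: "set_decode (Sv f n) = Hn n"
  using Sv_eq[of n] by (simp add: canon_enc)

lemma hh_disj: "n \<noteq> m \<Longrightarrow> hh n \<inter> hh m = {}"
proof -
  have *: "hh k \<inter> hh n = {}" if "k < n" for k n
    using dec_Sv[of n] that by (auto simp: hh_def[of n] hset_def Hn_def)
  assume "n \<noteq> m"
  then show ?thesis using *[of n m] *[of m n] by (cases "n < m") auto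
qed

end

theorem mainTheorem10:
  fixes A :: "nat set"
  assumes "D_weu A"
  shows "\<exists>h. fin_computable h \<and> (\<forall>n m. n \<noteq> m \<longrightarrow> h n \<inter> h m = {}) \<and>
             (\<forall>n. \<exists>z\<in>h n. z \<notin> A)"
proof -
  obtain f where fc: "fin_computable f" and
    w': "\<forall>e. (\<forall>z\<in>f e. phi e z \<noteq> None) \<longrightarrow> (\<exists>z\<in>f e. phi e z \<noteq> Some (ind A z))"
    using assms unfolding D_weu_def by (elim conjE exE)
  note w = w'[rule_format]
  have fin: "\<And>e. finite (f e)" using fc by (simp add: fin_computable_def)
  have "computable (\<lambda>e. canon (f e))" using fc by (simp add: fin_computable_def)
  then obtain RF where RF: "ok 1 RF (\<lambda>xs. canon (f (xs!0)))"
    using computable_ok by blast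
  have "fin_computable (hh f)"
    unfolding fin_computable_def
  proof
    show "\<forall>e. finite (hh f e)" using hset_fin[OF fin] by (simp add: hh_def[OF fin])
    have "computable (\<lambda>x. Gv f (Sv f ([x]!0)))" by (rule ok_computable[OF ok_HH[OF RF]])
    then show "computable (\<lambda>e. canon (hh f e))"
      by (simp add: hh_def[OF fin] Gv_eq[OF fin])
  qed
  moreover have "\<forall>n m. n \<noteq> m \<longrightarrow> hh f n \<inter> hh f m = {}" by (intro allI impI hh_disj[OF fin])
  moreover have "\<exists>z\<in>hh f n. z \<notin> A" for n
  proof -
    let ?H = "Hn f n"
    let ?T = "?H - A"
    have fH: "finite ?H" using Sv_eq[OF fin, where n=n] by simp
    have fT: "finite ?T" using fH by simp
    define t where "t = canon ?T"
    have "canon ?T \<le> canon ?H" unfolding canon_def by (rule sum_mono2[OF fH]) auto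
    then have tle: "t \<le> Sv f n"
      using Sv_eq[OF fin, where n=n] unfolding t_def by simp
    have ph: "phi (enc (P t)) z = Some (if z \<in> ?T then 0 else 1)" for z
    proof -
      have "phi (enc (P t)) z = Some (if t div 2 ^ z mod 2 = 0 then 1 else 0)"
        using ok_phi[OF ok_P[of t], of z] by simp
      moreover have "(t div 2 ^ z mod 2 = 0) \<longleftrightarrow> z \<notin> ?T"
        unfolding t_def by (rule mem_canon[OF fT])
      ultimately show ?thesis by simp
    qed
    have "\<forall>z\<in>f (enc (P t)). phi (enc (P t)) z \<noteq> None" using ph by simp
    then obtain z where z: "z \<in> f (enc (P t))" "phi (enc (P t)) z \<noteq> Some (ind A z)"
      using w[of "enc (P t)"] by blast
    have zH: "z \<notin> ?H"
    proof
      assume "z \<in> ?H" then show False using z(2) by (auto simp: ph ind_def split: if_splits)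
    qed
    then have zA: "z \<notin> A" using z(2) by (auto simp: ph ind_def split: if_splits)
    have "z \<in> hh f n"
      unfolding hh_def[OF fin] hset_def[OF fin] dec_Sv[OF fin] using zH z(1) tle by auto
    then show ?thesis using zA by blast
  qed
  ultimately show ?thesis by (intro exI[of _ "hh f"] conjI allI) auto
qed

end
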